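(* Let $F:\mathbf{C}\rightleftarrows\mathbf{D}:G$ be an adjunction ($F$ left adjoint to $G$). (a) Assume that $\mathrm{Aut}(F(\mathcal{A}))=F(\mathrm{Aut}(\mathcal{A}))$ for every object $\mathcal{A}$ of $\mathbf{C}$. If $\mathbf{D}$ has the Ramsey property for objects, then so does $\mathbf{C}$. (b) Assume that $\mathrm{Aut}(G(\mathcal{B}))=G(\mathrm{Aut}(\mathcal{B}))$ for every object $\mathcal{B}$ of $\mathbf{D}$. If $\mathbf{C}$ has the dual Ramsey property for objects, then so does $\mathbf{D}$.
   Context: For objects $\mathcal{A},\mathcal{B}$ of a category, $\hom(\mathcal{A},\mathcal{B})$ is the set of morphisms $\mathcal{A}\to\mathcal{B}$; write $\mathcal{A}\to\mathcal{B}$ if it is nonempty. $\mathrm{Aut}(\mathcal{A})$ is the set of invertible morphisms $\mathcal{A}\to\mathcal{A}$, and $F(\mathrm{Aut}(\mathcal{A}))=\{F(\alpha):\alpha\in\mathrm{Aut}(\mathcal{A})\}$. On $\hom(\mathcal{A},\mathcal{B})$ let $f\sim_\mathcal{A} f'$ iff $f'=f\cdot\alpha$ for some $\alpha\in\mathrm{Aut}(\mathcal{A})$, and put $\binom{\mathcal{B}}{\mathcal{A}}=\hom(\mathcal{A},\mathcal{B})/\sim_\mathcal{A}$; for $w:\mathcal{B}\to\mathcal{C}$ set $w\cdot(f/\sim_\mathcal{A})=(w\cdot f)/\sim_\mathcal{A}$. A $k$-coloring of a set $S$ is a decomposition $S=\mathcal{M}_1\cup\dots\cup\mathcal{M}_k$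 into pairwise disjoint sets. For $k\ge2$, $\mathcal{C}\longrightarrow(\mathcal{B})^{\mathcal{A}}_k$ means $\mathcal{A}\to\mathcal{B}\to\mathcal{C}$ and for every $k$-coloring of $\binom{\mathcal{C}}{\mathcal{A}}$ there are $i$ and $w:\mathcal{B}\to\mathcal{C}$ with $w\cdot\binom{\mathcal{B}}{\mathcal{A}}\subseteq\mathcal{M}_i$. A category has the Ramsey property for objects if for every $k\ge2$ and all objects $\mathcal{A}\to\mathcal{B}$ there is an object $\mathcal{C}$ with $\mathcal{C}\longrightarrow(\mathcal{B})^{\mathcal{A}}_k$. A category $\mathbf{C}$ has the dual Ramsey property for objects if $\mathbf{C}^{\mathrm{op}}$ has the Ramsey property for objects. *)

theory Defs
  imports Main
begin

text \<open>A category is given by its object set, hom-sets, composition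
  (comp g f is "g after f", written g . f in the paper) and identities.\<close>
record ('o,'m) cat =
  Ob   :: "'o set"
  Hom  :: "'o \<Rightarrow> 'o \<Rightarrow> 'm set"
  comp :: "'m \<Rightarrow> 'm \<Rightarrow> 'm"
  idm  :: "'o \<Rightarrow> 'm"

definition is_category :: "('o,'m) cat \<Rightarrow> bool" where
  "is_category C \<longleftrightarrow>
     (\<forall>a\<in>Ob C. idm C a \<in> Hom C a a) \<and>
     (\<forall>a\<in>Ob C. \<forall>b\<in>Ob C. \<forall>c\<in>Ob C. \<forall>f\<in>Hom C a b. \<forall>g\<in>Hom C b c.
         comp C g f \<in> Hom C a c) \<and>
     (\<forall>a\<in>Ob C. \<forall>b\<in>Ob C. \<forall>c\<in>Ob C. \<forall>d\<in>Ob C. \<forall>f\<in>Hom C a b. \<forall>g\<in>Hom C b c.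
         \<forall>h\<in>Hom C c d. comp C h (comp C g f) = comp C (comp C h g) f) \<and>
     (\<forall>a\<in>Ob C. \<forall>b\<in>Ob C. \<forall>f\<in>Hom C a b.
         comp C (idm C b) f = f \<and> comp C f (idm C a) = f) \<and>
     (\<forall>a\<in>Ob C. \<forall>b\<in>Ob C. \<forall>a'\<in>Ob C. \<forall>b'\<in>Ob C.
         (a, b) \<noteq> (a', b') \<longrightarrow> Hom C a b \<inter> Hom C a' b' = {})"

definition op_cat :: "('o,'m) cat \<Rightarrow> ('o,'m) cat" where
  "op_cat C = \<lparr> Ob = Ob C, Hom = (\<lambda>a b. Hom C b a),
                comp = (\<lambda>g f. comp C f g), idm = idm C \<rparr>"

definition is_functor ::
  "('a,'f) cat \<Rightarrow> ('b,'g) cat \<Rightarrow> ('a \<Rightarrow> 'b) \<Rightarrow> ('f \<Rightarrow> 'g) \<Rightarrow> bool" where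
  "is_functor C D Fo Fm \<longleftrightarrow>
     (\<forall>a\<in>Ob C. Fo a \<in> Ob D) \<and>
     (\<forall>a\<in>Ob C. \<forall>b\<in>Ob C. \<forall>f\<in>Hom C a b. Fm f \<in> Hom D (Fo a) (Fo b)) \<and>
     (\<forall>a\<in>Ob C. \<forall>b\<in>Ob C. \<forall>c\<in>Ob C. \<forall>f\<in>Hom C a b. \<forall>g\<in>Hom C b c.
         Fm (comp C g f) = comp D (Fm g) (Fm f)) \<and>
     (\<forall>a\<in>Ob C. Fm (idm C a) = idm D (Fo a))"

definition is_adjunction ::
  "('a,'f) cat \<Rightarrow> ('b,'g) cat \<Rightarrow> ('a \<Rightarrow> 'b) \<Rightarrow> ('f \<Rightarrow> 'g)
   \<Rightarrow> ('b \<Rightarrow> 'a) \<Rightarrow> ('g \<Rightarrow> 'f) \<Rightarrow> ('a \<Rightarrow> 'b \<Rightarrow> 'g \<Rightarrow> 'f) \<Rightarrow> bool" where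
  "is_adjunction C D Fo Fm Go Gm phi \<longleftrightarrow>
     is_category C \<and> is_category D \<and>
     is_functor C D Fo Fm \<and> is_functor D C Go Gm \<and>
     (\<forall>A\<in>Ob C. \<forall>B\<in>Ob D.
         bij_betw (phi A B) (Hom D (Fo A) B) (Hom C A (Go B))) \<and>
     (\<forall>A\<in>Ob C. \<forall>A'\<in>Ob C. \<forall>B\<in>Ob D. \<forall>f\<in>Hom C A' A. \<forall>g\<in>Hom D (Fo A) B.
         phi A' B (comp D g (Fm f)) = comp C (phi A B g) f) \<and>
     (\<forall>A\<in>Ob C. \<forall>B\<in>Ob D. \<forall>B'\<in>Ob D. \<forall>g\<in>Hom D (Fo A) B. \<forall>h\<in>Hom D B B'.
         phi A B' (comp D h g) = comp C (Gm h) (phi A B g))"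

definition Aut :: "('o,'m) cat \<Rightarrow> 'o \<Rightarrow> 'm set" where
  "Aut C a = {\<alpha> \<in> Hom C a a. \<exists>\<beta>\<in>Hom C a a.
                 comp C \<alpha> \<beta> = idm C a \<and> comp C \<beta> \<alpha> = idm C a}"

definition arr :: "('o,'m) cat \<Rightarrow> 'o \<Rightarrow> 'o \<Rightarrow> bool" where
  "arr C a b \<longleftrightarrow> Hom C a b \<noteq> {}"

definition simrel :: "('o,'m) cat \<Rightarrow> 'o \<Rightarrow> 'o \<Rightarrow> ('m \<times> 'm) set" where
  "simrel C a b = {(f, f'). f \<in> Hom C a b \<and> f' \<in> Hom C a b \<and>
                     (\<exists>\<alpha>\<in>Aut C a. f' = comp C f \<alpha>)}"

definition binom :: "('o,'m) cat \<Rightarrow> 'o \<Rightarrow> 'o \<Rightarrow> 'm set set" where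
  "binom C b a = Hom C a b // simrel C a b"

text \<open>w \<cdot> binom(B,A) for w : B -> C', using w \<cdot> (f/\<sim>) = (w \<cdot> f)/\<sim>.\<close>
definition act_binom :: "('o,'m) cat \<Rightarrow> 'o \<Rightarrow> 'o \<Rightarrow> 'o \<Rightarrow> 'm \<Rightarrow> 'm set set" where
  "act_binom C a b c w = {simrel C a c `` {comp C w f} | f. f \<in> Hom C a b}"

definition coloring :: "nat \<Rightarrow> 'x set \<Rightarrow> (nat \<Rightarrow> 'x set) \<Rightarrow> bool" where
  "coloring k S M \<longleftrightarrow> (\<Union>i\<in>{1..k}. M i) = S \<and>
     (\<forall>i\<in>{1..k}. \<forall>j\<in>{1..k}. i \<noteq> j \<longrightarrow> M i \<inter> M j = {})"

definition ramsey_arrow :: "('o,'m) cat \<Rightarrow> 'o \<Rightarrow> 'o \<Rightarrow> 'o \<Rightarrow> nat \<Rightarrow> bool" where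
  "ramsey_arrow C c b a k \<longleftrightarrow> arr C a b \<and> arr C b c \<and>
     (\<forall>M. coloring k (binom C c a) M \<longrightarrow>
        (\<exists>i\<in>{1..k}. \<exists>w\<in>Hom C b c. act_binom C a b c w \<subseteq> M i))"

definition ramsey_property :: "('o,'m) cat \<Rightarrow> bool" where
  "ramsey_property C \<longleftrightarrow>
     (\<forall>k\<ge>2. \<forall>a\<in>Ob C. \<forall>b\<in>Ob C. arr C a b \<longrightarrow>
        (\<exists>c\<in>Ob C. ramsey_arrow C c b a k))"

definition dual_ramsey_property :: "('o,'m) cat \<Rightarrow> bool" where
  "dual_ramsey_property C \<longleftrightarrow> ramsey_property (op_cat C)"

end

theory Submission imports Defs begin

lemma catD:
  assumes "is_category C"
  shows "a\<in>Ob C \<Longrightarrow> idm C a \<in> Hom C a a"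
    and "a\<in>Ob C \<Longrightarrow> b\<in>Ob C \<Longrightarrow> c\<in>Ob C \<Longrightarrow> f\<in>Hom C a b \<Longrightarrow> g\<in>Hom C b c \<Longrightarrow> comp C g f \<in> Hom C a c"
    and "a\<in>Ob C \<Longrightarrow> b\<in>Ob C \<Longrightarrow> c\<in>Ob C \<Longrightarrow> d\<in>Ob C \<Longrightarrow> f\<in>Hom C a b \<Longrightarrow> g\<in>Hom C b c \<Longrightarrow> h\<in>Hom C c d \<Longrightarrow> comp C h (comp C g f) = comp C (comp C h g) f"
    and "a\<in>Ob C \<Longrightarrow> b\<in>Ob C \<Longrightarrow> f\<in>Hom C a b \<Longrightarrow> comp C (idm C b) f = f"
    and "a\<in>Ob C \<Longrightarrow> b\<in>Ob C \<Longrightarrow> f\<in>Hom C a b \<Longrightarrow> comp C f (idm C a) = f"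
  using assms unfolding is_category_def
  apply -
  subgoal by auto
  subgoal by auto
  subgoal by auto
  subgoal by auto
  subgoal by auto
  done

lemma simrel_equiv:
  assumes C: "is_category C" and a: "a\<in>Ob C" and b: "b\<in>Ob C"
  shows "equiv (Hom C a b) (simrel C a b)"
proof (rule equivI)
  note cd = catD[OF C]
  have ia: "idm C a \<in> Hom C a a" using cd(1)[OF a] .
  have iia: "comp C (idm C a) (idm C a) = idm C a" using cd(4)[OF a a ia] .
  have idA: "idm C a \<in> Aut C a" unfolding Aut_def using ia iia by blast
  show "simrel C a b \<subseteq> Hom C a b \<times> Hom C a b" unfolding simrel_def by blast
  show "refl_on (Hom C a b) (simrel C a b)"
  proof (rule refl_onI)
    fix f assume f: "f \<in> Hom C a b"
    have "f = comp C f (idm C a)" using cd(5)[OF a b f] by simp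
    thus "(f,f) \<in> simrel C a b" unfolding simrel_def using f idA by blast
  qed
  show "sym (simrel C a b)"
  proof (rule symI)
    fix f f' assume "(f,f') \<in> simrel C a b"
    then obtain \<alpha> where f: "f \<in> Hom C a b" "f' \<in> Hom C a b" and al: "\<alpha>\<in>Aut C a" and e: "f' = comp C f \<alpha>"
      unfolding simrel_def by blast
    then obtain \<beta> where be: "\<beta>\<in>Hom C a a" "comp C \<alpha> \<beta> = idm C a" "comp C \<beta> \<alpha> = idm C a"
      and alh: "\<alpha> \<in> Hom C a a" unfolding Aut_def by blast
    have "\<beta> \<in> Aut C a" unfolding Aut_def using be alh by blast
    moreover have "comp C f' \<beta> = f" using e cd(3)[OF a a a b be(1) alh f(1)] be cd(5)[OF a b f(1)] by simp
    ultimately show "(f',f) \<in> simrel C a b" unfolding simrel_def using f by blast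
  qed
  show "trans (simrel C a b)"
  proof (rule transI)
    fix f f' f'' assume "(f,f') \<in> simrel C a b" "(f',f'') \<in> simrel C a b"
    then obtain \<alpha> \<alpha>' where f: "f \<in> Hom C a b" "f' \<in> Hom C a b" "f'' \<in> Hom C a b"
      and al: "\<alpha>\<in>Aut C a" "\<alpha>'\<in>Aut C a" and e: "f' = comp C f \<alpha>" "f'' = comp C f' \<alpha>'"
      unfolding simrel_def by blast
    obtain \<beta> where be: "\<beta>\<in>Hom C a a" "comp C \<alpha> \<beta> = idm C a" "comp C \<beta> \<alpha> = idm C a"
      and alh: "\<alpha> \<in> Hom C a a" using al unfolding Aut_def by blast
    obtain \<beta>' where be': "\<beta>'\<in>Hom C a a" "comp C \<alpha>' \<beta>' = idm C a" "comp C \<beta>' \<alpha>' = idm C a"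
      and alh': "\<alpha>' \<in> Hom C a a" using al unfolding Aut_def by blast
    have c1: "comp C \<alpha> \<alpha>' \<in> Hom C a a" using cd(2)[OF a a a alh' alh] .
    have c2: "comp C \<beta>' \<beta> \<in> Hom C a a" using cd(2)[OF a a a be(1) be'(1)] .
    have "comp C (comp C \<alpha> \<alpha>') (comp C \<beta>' \<beta>) = comp C \<alpha> (comp C \<alpha>' (comp C \<beta>' \<beta>))"
      using cd(3)[OF a a a a c2 alh' alh] by simp
    also have "comp C \<alpha>' (comp C \<beta>' \<beta>) = \<beta>"
      using cd(3)[OF a a a a be(1) be'(1) alh'] be'(2) cd(4)[OF a a be(1)] by simp
    finally have i1: "comp C (comp C \<alpha> \<alpha>') (comp C \<beta>' \<beta>) = idm C a" using be by simp
    have "comp C (comp C \<beta>' \<beta>) (comp C \<alpha> \<alpha>') = comp C \<beta>' (comp C \<beta> (comp C \<alpha> \<alpha>'))"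
      using cd(3)[OF a a a a c1 be(1) be'(1)] by simp
    also have "comp C \<beta> (comp C \<alpha> \<alpha>') = \<alpha>'"
      using cd(3)[OF a a a a alh' alh be(1)] be(3) cd(4)[OF a a alh'] by simp
    finally have i2: "comp C (comp C \<beta>' \<beta>) (comp C \<alpha> \<alpha>') = idm C a" using be' by simp
    have "comp C \<alpha> \<alpha>' \<in> Aut C a" unfolding Aut_def using c1 c2 i1 i2 by blast
    moreover have "f'' = comp C f (comp C \<alpha> \<alpha>')" using e cd(3)[OF a a a b alh' alh f(1)] by simp
    ultimately show "(f,f'') \<in> simrel C a b" unfolding simrel_def using f by blast
  qed
qed


lemma adjD:
  assumes "is_adjunction C D Fo Fm Go Gm phi"
  shows adjD_C: "is_category C" and adjD_D: "is_category D"
   and adjD_F: "is_functor C D Fo Fm" and adjD_G: "is_functor D C Go Gm"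
   and adjD_bij: "\<forall>A\<in>Ob C. \<forall>B\<in>Ob D. bij_betw (phi A B) (Hom D (Fo A) B) (Hom C A (Go B))"
   and adjD_n1: "\<forall>A\<in>Ob C. \<forall>A'\<in>Ob C. \<forall>B\<in>Ob D. \<forall>f\<in>Hom C A' A. \<forall>g\<in>Hom D (Fo A) B.
         phi A' B (comp D g (Fm f)) = comp C (phi A B g) f"
   and adjD_n2: "\<forall>A\<in>Ob C. \<forall>B\<in>Ob D. \<forall>B'\<in>Ob D. \<forall>g\<in>Hom D (Fo A) B. \<forall>h\<in>Hom D B B'.
         phi A B' (comp D h g) = comp C (Gm h) (phi A B g)"
  using assms unfolding is_adjunction_def
  apply -
  apply (elim conjE, assumption)+
  done

lemma adj_n1: "is_adjunction C D Fo Fm Go Gm phi \<Longrightarrow> A\<in>Ob C \<Longrightarrow> A'\<in>Ob C \<Longrightarrow> B\<in>Ob D \<Longrightarrow> f\<in>Hom C A' A \<Longrightarrow> g\<in>Hom D (Fo A) B \<Longrightarrow>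
         phi A' B (comp D g (Fm f)) = comp C (phi A B g) f"
  using adjD_n1 by fast
lemma adj_n2: "is_adjunction C D Fo Fm Go Gm phi \<Longrightarrow> A\<in>Ob C \<Longrightarrow> B\<in>Ob D \<Longrightarrow> B'\<in>Ob D \<Longrightarrow> g\<in>Hom D (Fo A) B \<Longrightarrow> h\<in>Hom D B B' \<Longrightarrow>
         phi A B' (comp D h g) = comp C (Gm h) (phi A B g)"
  using adjD_n2 by fast
lemma adj_bij: "is_adjunction C D Fo Fm Go Gm phi \<Longrightarrow> A\<in>Ob C \<Longrightarrow> B\<in>Ob D \<Longrightarrow> bij_betw (phi A B) (Hom D (Fo A) B) (Hom C A (Go B))"
  using adjD_bij by fast
lemma FUN: assumes "is_functor C D Fo Fm"
  shows FUN_o: "A\<in>Ob C \<Longrightarrow> Fo A \<in> Ob D"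
  and FUN_m: "A\<in>Ob C \<Longrightarrow> B\<in>Ob C \<Longrightarrow> f\<in>Hom C A B \<Longrightarrow> Fm f \<in> Hom D (Fo A) (Fo B)"
  using assms unfolding is_functor_def by auto


lemma ramsey_arrowD: "ramsey_arrow C c b a k \<Longrightarrow> coloring k (binom C c a) M \<Longrightarrow>
   \<exists>i\<in>{1..k}. \<exists>w\<in>Hom C b c. act_binom C a b c w \<subseteq> M i"
  unfolding ramsey_arrow_def by blast
lemma ramsey_arrow_arr: "ramsey_arrow C c b a k \<Longrightarrow> arr C b c"
  unfolding ramsey_arrow_def by blast
lemma ramsey_propertyD: "ramsey_property C \<Longrightarrow> 2 \<le> k \<Longrightarrow> a\<in>Ob C \<Longrightarrow> b\<in>Ob C \<Longrightarrow> arr C a b \<Longrightarrow>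
   \<exists>c\<in>Ob C. ramsey_arrow C c b a k"
  unfolding ramsey_property_def by blast
lemma coloringD: "coloring k S M \<Longrightarrow> (\<Union>i\<in>{1..k}. M i) = S"
   "coloring k S M \<Longrightarrow> i\<in>{1..k} \<Longrightarrow> j\<in>{1..k} \<Longrightarrow> i \<noteq> j \<Longrightarrow> M i \<inter> M j = {}"
  unfolding coloring_def by blast+

lemma partA:
  assumes adj: "is_adjunction C D Fo Fm Go Gm phi"
    and aut: "\<forall>A\<in>Ob C. Aut D (Fo A) = Fm ` Aut C A"
    and rD: "ramsey_property D"
  shows "ramsey_property C"
proof -
  have Cc: "is_category C" and Dc: "is_category D" using adjD_C[OF adj] adjD_D[OF adj] by -
  have FO: "\<And>A. A\<in>Ob C \<Longrightarrow> Fo A \<in> Ob D"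
    and FM: "\<And>A B f. A\<in>Ob C \<Longrightarrow> B\<in>Ob C \<Longrightarrow> f\<in>Hom C A B \<Longrightarrow> Fm f \<in> Hom D (Fo A) (Fo B)"
    by (fact FUN_o[OF adjD_F[OF adj]], fact FUN_m[OF adjD_F[OF adj]])
  have GO: "\<And>B. B\<in>Ob D \<Longrightarrow> Go B \<in> Ob C"
    by (fact FUN_o[OF adjD_G[OF adj]])
  have BIJ: "\<And>A B. A\<in>Ob C \<Longrightarrow> B\<in>Ob D \<Longrightarrow> bij_betw (phi A B) (Hom D (Fo A) B) (Hom C A (Go B))"
    by (fact adj_bij[OF adj])
  have NAT1: "\<And>A A' B f g. A\<in>Ob C \<Longrightarrow> A'\<in>Ob C \<Longrightarrow> B\<in>Ob D \<Longrightarrow> f\<in>Hom C A' A \<Longrightarrow> g\<in>Hom D (Fo A) B \<Longrightarrow>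
         phi A' B (comp D g (Fm f)) = comp C (phi A B g) f"
    by (fact adj_n1[OF adj])
  have PHI: "\<And>A B g. A\<in>Ob C \<Longrightarrow> B\<in>Ob D \<Longrightarrow> g\<in>Hom D (Fo A) B \<Longrightarrow> phi A B g \<in> Hom C A (Go B)"
    using BIJ by (rule bij_betw_apply)
  show ?thesis unfolding ramsey_property_def
  proof (intro allI impI ballI)
    fix k :: nat and a b assume k: "2 \<le> k" and a: "a \<in> Ob C" and b: "b \<in> Ob C" and ab: "arr C a b"
    then obtain f0 where f0: "f0 \<in> Hom C a b" unfolding arr_def by blast
    have "arr D (Fo a) (Fo b)" using FM[OF a b f0] unfolding arr_def by blast
    then obtain E where E: "E \<in> Ob D" and RA: "ramsey_arrow D E (Fo b) (Fo a) k"
      using ramsey_propertyD[OF rD k FO[OF a] FO[OF b]] by blast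
    have GE: "Go E \<in> Ob C" using GO[OF E] .
    have Fa: "Fo a \<in> Ob D" and Fb: "Fo b \<in> Ob D" using FO a b by auto
    obtain w0 where "w0 \<in> Hom D (Fo b) E" using ramsey_arrow_arr[OF RA] unfolding arr_def by blast
    hence bGE: "arr C b (Go E)" using PHI[OF b E] unfolding arr_def by blast
    define R where "R = simrel C a (Go E)"
    define S where "S = simrel D (Fo a) E"
    define cl where "cl g = R `` {phi a E g}" for g
    have eqR: "equiv (Hom C a (Go E)) R" unfolding R_def using simrel_equiv[OF Cc a GE] .
    have eqS: "equiv (Hom D (Fo a) E) S" unfolding S_def using simrel_equiv[OF Dc Fa E] .
    have wd: "cl g' = cl g" if gg: "(g,g') \<in> S" for g g'
    proof -
      obtain \<alpha> where g: "g \<in> Hom D (Fo a) E" "g' \<in> Hom D (Fo a) E" and al: "\<alpha> \<in> Aut D (Fo a)"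
        and e: "g' = comp D g \<alpha>" using gg unfolding S_def simrel_def by blast
      obtain \<beta> where be: "\<beta> \<in> Aut C a" and ab: "\<alpha> = Fm \<beta>" using al aut a by blast
      have bh: "\<beta> \<in> Hom C a a" using be unfolding Aut_def by blast
      have "phi a E g' = comp C (phi a E g) \<beta>" using NAT1[OF a a E bh g(1)] e ab by simp
      hence "(phi a E g, phi a E g') \<in> R" unfolding R_def simrel_def
        using PHI[OF a E g(1)] PHI[OF a E g(2)] be by blast
      thus ?thesis unfolding cl_def using equiv_class_eq[OF eqR] by blast
    qed
    have clin: "cl g \<in> binom C (Go E) a" if "g \<in> Hom D (Fo a) E" for g
      unfolding cl_def binom_def R_def[symmetric] using PHI[OF a E that] by (rule quotientI)
    show "\<exists>c\<in>Ob C. ramsey_arrow C c b a k"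
    proof (intro bexI[OF _ GE])
      show "ramsey_arrow C (Go E) b a k" unfolding ramsey_arrow_def
      proof (intro conjI allI impI)
        show "arr C a b" by fact
        show "arr C b (Go E)" by fact
        fix M assume col: "coloring k (binom C (Go E) a) M"
        define M' where "M' i = {X \<in> binom D E (Fo a). \<exists>g\<in>X. cl g \<in> M i}" for i
        have key: "(\<exists>g'\<in>S``{g}. cl g' \<in> M i) \<longleftrightarrow> cl g \<in> M i" if "g \<in> Hom D (Fo a) E" for g i
        proof
          assume "\<exists>g'\<in>S``{g}. cl g' \<in> M i"
          then obtain g' where "(g,g') \<in> S" "cl g' \<in> M i" by blast
          thus "cl g \<in> M i" using wd[of g g'] by simp
        next
          assume "cl g \<in> M i"
          moreover have "g \<in> S``{g}" using eqS that unfolding equiv_def refl_on_def by blast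
          ultimately show "\<exists>g'\<in>S``{g}. cl g' \<in> M i" by blast
        qed
        have colM': "coloring k (binom D E (Fo a)) M'"
          unfolding coloring_def
        proof (intro conjI ballI impI)
          show "(\<Union>i\<in>{1..k}. M' i) = binom D E (Fo a)"
          proof
            show "(\<Union>i\<in>{1..k}. M' i) \<subseteq> binom D E (Fo a)" unfolding M'_def by blast
            show "binom D E (Fo a) \<subseteq> (\<Union>i\<in>{1..k}. M' i)"
            proof
              fix X assume X: "X \<in> binom D E (Fo a)"
              then obtain g where g: "g \<in> Hom D (Fo a) E" and Xe: "X = S``{g}"
                unfolding binom_def S_def by (auto elim: quotientE)
              have "cl g \<in> (\<Union>i\<in>{1..k}. M i)" using clin[OF g] coloringD(1)[OF col] by simp
              then obtain i where i: "i\<in>{1..k}" "cl g \<in> M i" by blast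
              hence "X \<in> M' i" unfolding M'_def using X Xe key[OF g] by blast
              thus "X \<in> (\<Union>i\<in>{1..k}. M' i)" using i by blast
            qed
          qed
          fix i j assume i: "i\<in>{1..k}" and j: "j\<in>{1..k}" and ij: "i \<noteq> j"
          have dj: "M i \<inter> M j = {}" using coloringD(2)[OF col i j ij] .
          show "M' i \<inter> M' j = {}"
          proof (rule ccontr)
            assume "M' i \<inter> M' j \<noteq> {}"
            then obtain X where Xi: "X \<in> M' i" and Xj: "X \<in> M' j" by blast
            then obtain g where g: "g \<in> Hom D (Fo a) E" and Xe: "X = S``{g}"
              unfolding M'_def binom_def S_def by (auto elim: quotientE)
            have "cl g \<in> M i" using Xi Xe key[OF g] unfolding M'_def by blast
            moreover have "cl g \<in> M j" using Xj Xe key[OF g] unfolding M'_def by blast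
            ultimately show False using dj by blast
          qed
        qed
        then obtain i w where i: "i\<in>{1..k}" and w: "w \<in> Hom D (Fo b) E"
          and sub: "act_binom D (Fo a) (Fo b) E w \<subseteq> M' i"
          using ramsey_arrowD[OF RA colM'] by blast
        have w': "phi b E w \<in> Hom C b (Go E)" using PHI[OF b E w] .
        have "act_binom C a b (Go E) (phi b E w) \<subseteq> M i"
        proof
          fix Y assume "Y \<in> act_binom C a b (Go E) (phi b E w)"
          then obtain f where f: "f \<in> Hom C a b" and Ye: "Y = R `` {comp C (phi b E w) f}"
            unfolding act_binom_def R_def by blast
          have wf: "comp D w (Fm f) \<in> Hom D (Fo a) E"
            using catD(2)[OF Dc Fa Fb E FM[OF a b f] w] .
          have Y2: "Y = cl (comp D w (Fm f))" unfolding cl_def Ye using NAT1[OF b a E f w] by simp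
          have "S``{comp D w (Fm f)} \<in> act_binom D (Fo a) (Fo b) E w"
            unfolding act_binom_def S_def using FM[OF a b f] by blast
          hence "S``{comp D w (Fm f)} \<in> M' i" using sub by blast
          hence "\<exists>g'\<in>S``{comp D w (Fm f)}. cl g' \<in> M i" unfolding M'_def by blast
          thus "Y \<in> M i" using key[OF wf] Y2 by blast
        qed
        thus "\<exists>i\<in>{1..k}. \<exists>w\<in>Hom C b (Go E). act_binom C a b (Go E) w \<subseteq> M i"
          using i w' by blast
      qed
    qed
  qed
qed


lemma op_simps[simp]: "Ob (op_cat C) = Ob C" "Hom (op_cat C) a b = Hom C b a"
  "comp (op_cat C) g f = comp C f g" "idm (op_cat C) = idm C"
  unfolding op_cat_def by auto

lemma op_category: assumes "is_category C" shows "is_category (op_cat C)"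
proof -
  have h1: "\<forall>a\<in>Ob C. idm C a \<in> Hom C a a"
   and h2: "\<forall>a\<in>Ob C. \<forall>b\<in>Ob C. \<forall>c\<in>Ob C. \<forall>f\<in>Hom C a b. \<forall>g\<in>Hom C b c. comp C g f \<in> Hom C a c"
   and h3: "\<forall>a\<in>Ob C. \<forall>b\<in>Ob C. \<forall>c\<in>Ob C. \<forall>d\<in>Ob C. \<forall>f\<in>Hom C a b. \<forall>g\<in>Hom C b c.
         \<forall>h\<in>Hom C c d. comp C h (comp C g f) = comp C (comp C h g) f"
   and h4: "\<forall>a\<in>Ob C. \<forall>b\<in>Ob C. \<forall>f\<in>Hom C a b. comp C (idm C b) f = f \<and> comp C f (idm C a) = f"
   and h5: "\<forall>a\<in>Ob C. \<forall>b\<in>Ob C. \<forall>a'\<in>Ob C. \<forall>b'\<in>Ob C. (a, b) \<noteq> (a', b') \<longrightarrow> Hom C a b \<inter> Hom C a' b' = {}"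
    using assms unfolding is_category_def by auto
  show ?thesis unfolding is_category_def op_simps
  proof (intro conjI)
    show "\<forall>a\<in>Ob C. idm C a \<in> Hom C a a" by fact
    show "\<forall>a\<in>Ob C. \<forall>b\<in>Ob C. \<forall>c\<in>Ob C. \<forall>f\<in>Hom C b a. \<forall>g\<in>Hom C c b. comp C f g \<in> Hom C c a"
      using h2 by blast
    show "\<forall>a\<in>Ob C. \<forall>b\<in>Ob C. \<forall>c\<in>Ob C. \<forall>d\<in>Ob C. \<forall>f\<in>Hom C b a. \<forall>g\<in>Hom C c b.
         \<forall>h\<in>Hom C d c. comp C (comp C f g) h = comp C f (comp C g h)"
      using h3 by metis
    show "\<forall>a\<in>Ob C. \<forall>b\<in>Ob C. \<forall>f\<in>Hom C b a. comp C f (idm C b) = f \<and> comp C (idm C a) f = f"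
      using h4 by blast
    show "\<forall>a\<in>Ob C. \<forall>b\<in>Ob C. \<forall>a'\<in>Ob C. \<forall>b'\<in>Ob C. (a, b) \<noteq> (a', b') \<longrightarrow> Hom C b a \<inter> Hom C b' a' = {}"
      using h5 by blast
  qed
qed

lemma op_functor: "is_functor C D Fo Fm \<Longrightarrow> is_functor (op_cat C) (op_cat D) Fo Fm"
  unfolding is_functor_def by simp

lemma op_Aut: "Aut (op_cat C) a = Aut C a"
  unfolding Aut_def by auto

lemma op_adj:
  assumes adj: "is_adjunction C D Fo Fm Go Gm phi"
  shows "is_adjunction (op_cat D) (op_cat C) Go Gm Fo Fm (\<lambda>B A. inv_into (Hom D (Fo A) B) (phi A B))"
proof -
  have Cc: "is_category C" and Dc: "is_category D" using adjD_C[OF adj] adjD_D[OF adj] by -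
  have FO: "\<And>A. A\<in>Ob C \<Longrightarrow> Fo A \<in> Ob D"
    and FM: "\<And>A B f. A\<in>Ob C \<Longrightarrow> B\<in>Ob C \<Longrightarrow> f\<in>Hom C A B \<Longrightarrow> Fm f \<in> Hom D (Fo A) (Fo B)"
    by (fact FUN_o[OF adjD_F[OF adj]], fact FUN_m[OF adjD_F[OF adj]])
  have GO: "\<And>B. B\<in>Ob D \<Longrightarrow> Go B \<in> Ob C"
    and GM: "\<And>A B f. A\<in>Ob D \<Longrightarrow> B\<in>Ob D \<Longrightarrow> f\<in>Hom D A B \<Longrightarrow> Gm f \<in> Hom C (Go A) (Go B)"
    by (fact FUN_o[OF adjD_G[OF adj]], fact FUN_m[OF adjD_G[OF adj]])
  have BIJ: "\<And>A B. A\<in>Ob C \<Longrightarrow> B\<in>Ob D \<Longrightarrow> bij_betw (phi A B) (Hom D (Fo A) B) (Hom C A (Go B))"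
    by (fact adj_bij[OF adj])
  have NAT1: "\<And>A A' B f g. A\<in>Ob C \<Longrightarrow> A'\<in>Ob C \<Longrightarrow> B\<in>Ob D \<Longrightarrow> f\<in>Hom C A' A \<Longrightarrow> g\<in>Hom D (Fo A) B \<Longrightarrow>
         phi A' B (comp D g (Fm f)) = comp C (phi A B g) f"
    by (fact adj_n1[OF adj])
  have NAT2: "\<And>A B B' g h. A\<in>Ob C \<Longrightarrow> B\<in>Ob D \<Longrightarrow> B'\<in>Ob D \<Longrightarrow> g\<in>Hom D (Fo A) B \<Longrightarrow> h\<in>Hom D B B' \<Longrightarrow>
         phi A B' (comp D h g) = comp C (Gm h) (phi A B g)"
    by (fact adj_n2[OF adj])
  define psi where "psi A B = inv_into (Hom D (Fo A) B) (phi A B)" for A B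
  have PB: "\<And>A B. A\<in>Ob C \<Longrightarrow> B\<in>Ob D \<Longrightarrow> bij_betw (psi A B) (Hom C A (Go B)) (Hom D (Fo A) B)"
    unfolding psi_def using BIJ bij_betw_inv_into by blast
  have PSI: "\<And>A B g. A\<in>Ob C \<Longrightarrow> B\<in>Ob D \<Longrightarrow> g\<in>Hom C A (Go B) \<Longrightarrow> psi A B g \<in> Hom D (Fo A) B"
    using PB bij_betwE by blast
  have PP: "\<And>A B g. A\<in>Ob C \<Longrightarrow> B\<in>Ob D \<Longrightarrow> g\<in>Hom C A (Go B) \<Longrightarrow> phi A B (psi A B g) = g"
    unfolding psi_def by (rule bij_betw_inv_into_right[OF BIJ])
  have PP2: "\<And>A B g. A\<in>Ob C \<Longrightarrow> B\<in>Ob D \<Longrightarrow> g\<in>Hom D (Fo A) B \<Longrightarrow> psi A B (phi A B g) = g"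
    unfolding psi_def by (rule bij_betw_inv_into_left[OF BIJ])
  have n1: "psi A B' (comp C (Gm f) g) = comp D f (psi A B g)"
    if "B\<in>Ob D" "B'\<in>Ob D" "A\<in>Ob C" "f\<in>Hom D B B'" "g\<in>Hom C A (Go B)" for A B B' f g
  proof -
    have x: "psi A B g \<in> Hom D (Fo A) B" using PSI that by blast
    have "phi A B' (comp D f (psi A B g)) = comp C (Gm f) g"
      using NAT2[OF that(3,1,2) x that(4)] PP that by simp
    moreover have "comp D f (psi A B g) \<in> Hom D (Fo A) B'"
      using catD(2)[OF Dc FO[OF that(3)] that(1,2) x that(4)] .
    ultimately show ?thesis using PP2[OF that(3,2)] by force
  qed
  have n2: "psi A' B (comp C g h) = comp D (psi A B g) (Fm h)"
    if "B\<in>Ob D" "A\<in>Ob C" "A'\<in>Ob C" "g\<in>Hom C A (Go B)" "h\<in>Hom C A' A" for A A' B g h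
  proof -
    have x: "psi A B g \<in> Hom D (Fo A) B" using PSI that by blast
    have "phi A' B (comp D (psi A B g) (Fm h)) = comp C g h"
      using NAT1[OF that(2,3,1,5) x] PP that by simp
    moreover have "comp D (psi A B g) (Fm h) \<in> Hom D (Fo A') B"
      using catD(2)[OF Dc FO[OF that(3)] FO[OF that(2)] that(1) FM[OF that(3,2,5)] x] .
    ultimately show ?thesis using PP2[OF that(3,1)] by force
  qed
  have FC: "is_functor C D Fo Fm" and GD: "is_functor D C Go Gm"
    using adjD_F[OF adj] adjD_G[OF adj] by -
  show ?thesis unfolding psi_def[symmetric] is_adjunction_def op_simps
  proof (intro conjI ballI)
    show "is_category (op_cat D)" using op_category[OF Dc] .
    show "is_category (op_cat C)" using op_category[OF Cc] .
    show "is_functor (op_cat D) (op_cat C) Go Gm" using op_functor[OF GD] .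
    show "is_functor (op_cat C) (op_cat D) Fo Fm" using op_functor[OF FC] .
    show "bij_betw (psi A B) (Hom C A (Go B)) (Hom D (Fo A) B)" if "B \<in> Ob D" "A \<in> Ob C" for A B
      using PB that by blast
    show "psi A B' (comp C (Gm f) g) = comp D f (psi A B g)"
      if "B\<in>Ob D" "B'\<in>Ob D" "A\<in>Ob C" "f\<in>Hom D B B'" "g\<in>Hom C A (Go B)" for A B B' f g
      using n1[OF that] .
    show "psi A' B (comp C g h) = comp D (psi A B g) (Fm h)"
      if "B\<in>Ob D" "A\<in>Ob C" "A'\<in>Ob C" "g\<in>Hom C A (Go B)" "h\<in>Hom C A' A" for A A' B g h
      using n2[OF that] .
  qed
qed

theorem lemma3p2:
  fixes C :: "('a,'f) cat" and D :: "('b,'g) cat"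
    and Fo :: "'a \<Rightarrow> 'b" and Fm :: "'f \<Rightarrow> 'g"
    and Go :: "'b \<Rightarrow> 'a" and Gm :: "'g \<Rightarrow> 'f"
    and phi :: "'a \<Rightarrow> 'b \<Rightarrow> 'g \<Rightarrow> 'f"
  assumes adj: "is_adjunction C D Fo Fm Go Gm phi"
  shows "((\<forall>A\<in>Ob C. Aut D (Fo A) = Fm ` Aut C A) \<longrightarrow>
            ramsey_property D \<longrightarrow> ramsey_property C)
       \<and> ((\<forall>B\<in>Ob D. Aut C (Go B) = Gm ` Aut D B) \<longrightarrow>
            dual_ramsey_property C \<longrightarrow> dual_ramsey_property D)"
proof (intro conjI impI)
  show "ramsey_property C" if "\<forall>A\<in>Ob C. Aut D (Fo A) = Fm ` Aut C A" "ramsey_property D"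
    using partA[OF adj that] .
  show "dual_ramsey_property D" if h: "\<forall>B\<in>Ob D. Aut C (Go B) = Gm ` Aut D B" "dual_ramsey_property C"
    using partA[OF op_adj[OF adj]] h unfolding dual_ramsey_property_def by (simp add: op_Aut)
qed

end
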